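(* Let $1<q<\infty$, $\alpha,\beta\in\mathbb R$, and let $f\in\mathbb M^2\cap\mathbb W_q^{\alpha,\beta}$ be nonnegative on $[-1,1]$. Then $f^q\in\mathbb M^2\cap\mathbb W_1^{q\alpha,q\beta}$, and for every $\delta>0$, \[ \omega_\varphi^2(f,\delta)_{w_{\alpha,\beta},q}\le c\,\omega_\varphi^2(f^q,\delta)_{w_{q\alpha,q\beta},1}^{1/q}, \] with $c$ independent of $f$ and $\delta$.
   Context: For $x\in[-1,1]$, $\varphi(x)=\sqrt{1-x^2}$, $w_{\alpha,\beta}(x)=(1+x)^\alpha(1-x)^\beta$. $\|g\|_{L_q(S)}$ is the $L_q$ norm over $S$; $\mathbb W_q^{\alpha,\beta}=\{f:\|w_{\alpha,\beta}f\|_{L_q[-1,1]}<\infty\}$. $\Delta_h^2(f,x)=f(x-h)-2f(x)+f(x+h)$ if $x\pm h\in[-1,1]$, else $0$; $\overrightarrow\Delta_h^2(f,x)=\Delta_h^2(f,x+h)$, $\overleftarrow\Delta_h^2(f,x)=\Delta_h^2(f,x-h)$. For a weight $w$: $\Omega_\varphi^2(f,\delta)_{w,q}=\sup_{0<h\le\delta}\|w(x)\Delta^2_{h\varphi(x)}(f,x)\|_{L_q[-1+8h^2,1-8h^2]}$, $\overrightarrow\Omega_\varphi^2(f,\delta)_{w,q}=\sup_{0<h\le8\delta^2}\|w\overrightarrow\Delta_h^2(f,\cdot)\|_{L_q[-1,-1+8\delta^2]}$, $\overleftarrow\Omega_\varphi^2(f,\delta)_{w,q}=\sup_{0<h\le8\delta^2}\|w\overleftarrow\Delta_h^2(f,\cdot)\|_{L_q[1-8\delta^2,1]}$,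 $\omega_\varphi^2=\Omega_\varphi^2+\overrightarrow\Omega_\varphi^2+\overleftarrow\Omega_\varphi^2$. $\mathbb M^2$ is the set of convex functions on $(-1,1)$ (all second divided differences nonnegative). *)

theory Defs
  imports "HOL-Analysis.Analysis"
begin

definition enn_powr :: "ennreal \<Rightarrow> real \<Rightarrow> ennreal" where
  "enn_powr t p = (if t = \<infinity> then \<infinity> else ennreal (enn2real t powr p))"

definition Lq_norm :: "real \<Rightarrow> real set \<Rightarrow> (real \<Rightarrow> real) \<Rightarrow> ennreal" where
  "Lq_norm q S g = enn_powr (\<integral>\<^sup>+ x. ennreal (\<bar>g x\<bar> powr q) * indicator S x \<partial>lborel) (1 / q)"

definition phi :: "real \<Rightarrow> real" where
  "phi x = sqrt (1 - x\<^sup>2)"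

definition wab :: "real \<Rightarrow> real \<Rightarrow> real \<Rightarrow> real" where
  "wab a b x = (1 + x) powr a * (1 - x) powr b"

definition Wq :: "real \<Rightarrow> real \<Rightarrow> real \<Rightarrow> (real \<Rightarrow> real) set" where
  "Wq q a b = {f. Lq_norm q {-1..1} (\<lambda>x. wab a b x * f x) < \<infinity>}"

definition Delta2 :: "(real \<Rightarrow> real) \<Rightarrow> real \<Rightarrow> real \<Rightarrow> real" where
  "Delta2 f h x = (if x - h \<in> {-1..1} \<and> x + h \<in> {-1..1}
                   then f (x - h) - 2 * f x + f (x + h) else 0)"

definition Delta2_fwd :: "(real \<Rightarrow> real) \<Rightarrow> real \<Rightarrow> real \<Rightarrow> real" where
  "Delta2_fwd f h x = Delta2 f h (x + h)"

definition Delta2_bwd :: "(real \<Rightarrow> real) \<Rightarrow> real \<Rightarrow> real \<Rightarrow> real" where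
  "Delta2_bwd f h x = Delta2 f h (x - h)"

definition Omega_main :: "(real \<Rightarrow> real) \<Rightarrow> real \<Rightarrow> (real \<Rightarrow> real) \<Rightarrow> real \<Rightarrow> ennreal" where
  "Omega_main f d w q = (SUP h\<in>{0<..d}.
      Lq_norm q {-1 + 8 * h\<^sup>2 .. 1 - 8 * h\<^sup>2} (\<lambda>x. w x * Delta2 f (h * phi x) x))"

definition Omega_fwd :: "(real \<Rightarrow> real) \<Rightarrow> real \<Rightarrow> (real \<Rightarrow> real) \<Rightarrow> real \<Rightarrow> ennreal" where
  "Omega_fwd f d w q = (SUP h\<in>{0<..8 * d\<^sup>2}.
      Lq_norm q {-1 .. -1 + 8 * d\<^sup>2} (\<lambda>x. w x * Delta2_fwd f h x))"

definition Omega_bwd :: "(real \<Rightarrow> real) \<Rightarrow> real \<Rightarrow> (real \<Rightarrow> real) \<Rightarrow> real \<Rightarrow> ennreal" where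
  "Omega_bwd f d w q = (SUP h\<in>{0<..8 * d\<^sup>2}.
      Lq_norm q {1 - 8 * d\<^sup>2 .. 1} (\<lambda>x. w x * Delta2_bwd f h x))"

definition omega_phi2 :: "(real \<Rightarrow> real) \<Rightarrow> real \<Rightarrow> (real \<Rightarrow> real) \<Rightarrow> real \<Rightarrow> ennreal" where
  "omega_phi2 f d w q = Omega_main f d w q + Omega_fwd f d w q + Omega_bwd f d w q"

end

theory Submission imports Defs begin

lemma powr_split1:
  fixes u q :: real assumes "0 \<le> u" "1 \<le> q"
  shows "u powr q = u * u powr (q - 1)"
proof (cases "u = 0")
  case True then show ?thesis by simp
next
  case False
  then have "u > 0" using assms by simp
  have "u powr (1 + (q - 1)) = u powr 1 * u powr (q - 1)" by (rule powr_add)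
  then show ?thesis using \<open>u > 0\<close> by simp
qed

lemma powr_superadd:
  fixes u v q :: real assumes "0 \<le> u" "0 \<le> v" "1 \<le> q"
  shows "u powr q + v powr q \<le> (u + v) powr q"
proof -
  have a: "u powr (q-1) \<le> (u+v) powr (q-1)" using assms by (intro powr_mono2) auto
  have b: "v powr (q-1) \<le> (u+v) powr (q-1)" using assms by (intro powr_mono2) auto
  have "u powr q + v powr q = u * u powr (q-1) + v * v powr (q-1)"
    using assms powr_split1 by simp
  also have "\<dots> \<le> u * (u+v) powr (q-1) + v * (u+v) powr (q-1)"
    using a b assms by (intro add_mono mult_left_mono) auto
  also have "\<dots> = (u+v) * (u+v) powr (q-1)" by (simp add: algebra_simps)
  also have "\<dots> = (u+v) powr q" using assms powr_split1[of "u+v" q] by simp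
  finally show ?thesis .
qed

lemma powr_le_self01:
  fixes t q :: real assumes "0 \<le> t" "t \<le> 1" "1 \<le> q"
  shows "t powr q \<le> t"
  using assms powr_le_one_le[of t q] by (cases "t = 0") auto

lemma powr_convex0:
  fixes q :: real assumes "1 \<le> q"
  shows "convex_on {0..} (\<lambda>x. x powr q)"
proof (rule convex_onI)
  fix t x y :: real assume t: "0 < t" "t < 1" and xy: "x \<in> {0..}" "y \<in> {0..}"
  show "((1 - t) *\<^sub>R x + t *\<^sub>R y) powr q \<le> (1 - t) * x powr q + t * y powr q"
  proof (cases "x = 0")
    case True
    have "(t * y) powr q = t powr q * y powr q" by (simp add: powr_mult)
    also have "\<dots> \<le> t * y powr q" using t assms powr_le_self01[of t q]
      by (intro mult_right_mono) auto
    finally show ?thesis using True by simp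
  next
    case x: False
    show ?thesis
    proof (cases "y = 0")
      case True
      have "((1-t) * x) powr q = (1-t) powr q * x powr q" by (simp add: powr_mult)
      also have "\<dots> \<le> (1-t) * x powr q" using t assms powr_le_self01[of "1-t" q]
        by (intro mult_right_mono) auto
      finally show ?thesis using True by simp
    next
      case False
      then show ?thesis using x xy t convex_onD[OF powr_convex[OF assms], of t x y] by auto
    qed
  qed
qed simp

lemma key_ineq:
  fixes a b c q :: real
  assumes "0 \<le> a" "0 \<le> b" "0 \<le> c" "2 * b \<le> a + c" "1 \<le> q"
  shows "(a - 2*b + c) powr q \<le> 2 powr (q - 1) * (a powr q - 2 * b powr q + c powr q)"
proof -
  define m where "m = (a + c) / 2"
  have mb: "b \<le> m" using assms m_def by simp
  have cv: "m powr q \<le> (1/2) * a powr q + (1/2) * c powr q"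
    using convex_onD[OF powr_convex0[OF assms(5)], of "1/2" a c] assms unfolding m_def
    by (simp add: field_simps)
  have sa: "(m - b) powr q + b powr q \<le> m powr q"
    using powr_superadd[of "m-b" b q] mb assms by simp
  have "(a - 2*b + c) powr q = (2 * (m - b)) powr q" unfolding m_def by (rule arg_cong[where f="\<lambda>z. z powr q"]) (simp add: field_simps)
  also have "\<dots> = 2 powr q * (m-b) powr q" by (rule powr_mult)
  also have "\<dots> = 2 powr (q-1) * (2 * (m-b) powr q)"
    using powr_split1[of 2 q] assms by simp
  also have "\<dots> \<le> 2 powr (q-1) * (a powr q - 2 * b powr q + c powr q)"
    using cv sa by (intro mult_left_mono) auto
  finally show ?thesis .
qed


lemma nn_integral_cmult_le:
  fixes c :: real assumes "0 < c"
  shows "(\<integral>\<^sup>+x. ennreal c * f x \<partial>M) \<le> ennreal c * integral\<^sup>N M f"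
  unfolding nn_integral_def[of M "\<lambda>x. ennreal c * f x"]
proof (rule SUP_least)
  fix g assume g: "g \<in> {g. simple_function M g \<and> g \<le> (\<lambda>x. ennreal c * f x)}"
  define g' where "g' = (\<lambda>y. ennreal (1/c) * y) \<circ> g"
  have sg: "simple_function M g'" using g unfolding g'_def by auto
  have inv: "ennreal (1/c) * ennreal c = 1" using assms
    by (simp add: ennreal_mult[symmetric])
  have le: "g' \<le> f"
  proof (rule le_funI)
    fix x
    have "g x \<le> ennreal c * f x" using g by (auto simp: le_fun_def)
    then have "ennreal (1/c) * g x \<le> ennreal (1/c) * (ennreal c * f x)" by (rule mult_left_mono) simp
    also have "\<dots> = f x" using inv by (simp add: mult.assoc[symmetric])
    finally show "g' x \<le> f x" by (simp add: g'_def)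
  qed
  have gg: "g = (\<lambda>x. ennreal c * g' x)"
    using inv by (auto simp: g'_def mult.assoc[symmetric] mult.commute[of "ennreal c"])
  have "integral\<^sup>S M g = ennreal c * integral\<^sup>S M g'"
    using sg by (subst gg) (rule simple_integral_mult)
  also have "\<dots> \<le> ennreal c * integral\<^sup>N M f"
    unfolding nn_integral_def using sg le by (intro mult_left_mono SUP_upper) auto
  finally show "integral\<^sup>S M g \<le> ennreal c * integral\<^sup>N M f" .
qed

lemma enn_powr_mono:
  assumes "s \<le> t" "0 < p"
  shows "enn_powr s p \<le> enn_powr t p"
proof (cases "t = \<infinity>")
  case True then show ?thesis by (simp add: enn_powr_def)
next
  case False
  then have "s \<noteq> \<infinity>" using assms top.extremum_unique by auto
  have "enn2real s \<le> enn2real t" using assms False by (intro enn2real_mono) (auto simp: less_top)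
  then have "enn2real s powr p \<le> enn2real t powr p" using assms by (intro powr_mono2) auto
  then show ?thesis using False \<open>s \<noteq> \<infinity>\<close> by (simp add: enn_powr_def ennreal_leI)
qed

lemma enn_powr_cmult:
  fixes K :: real assumes "0 < K" "0 < p"
  shows "enn_powr (ennreal K * t) p = ennreal (K powr p) * enn_powr t p"
proof (cases "t = \<infinity>")
  case True then show ?thesis using assms by (simp add: enn_powr_def ennreal_mult_top)
next
  case False
  then have "ennreal K * t \<noteq> \<infinity>" by (simp add: ennreal_mult_eq_top_iff)
  moreover have "enn2real (ennreal K * t) = K * enn2real t" using assms by (simp add: enn2real_mult)
  ultimately show ?thesis using False assms
    by (simp add: enn_powr_def powr_mult ennreal_mult[symmetric])
qed

lemma enn_powr_one: "enn_powr t 1 = t"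
  by (cases "t = \<infinity>") (auto simp: enn_powr_def ennreal_enn2real_if)

lemma Lq_bound:
  fixes K q :: real
  assumes q: "1 < q" and K: "0 < K"
    and ae: "AE x in lborel. x \<in> S \<longrightarrow> \<bar>g x\<bar> powr q \<le> K * \<bar>g' x\<bar> powr 1"
  shows "Lq_norm q S g \<le> ennreal (K powr (1/q)) * enn_powr (Lq_norm 1 S g') (1/q)"
proof -
  define J where "J = (\<integral>\<^sup>+ x. ennreal (\<bar>g' x\<bar> powr 1) * indicator S x \<partial>lborel)"
  have LJ: "Lq_norm 1 S g' = J" unfolding Lq_norm_def J_def by (simp add: enn_powr_one)
  have "(\<integral>\<^sup>+ x. ennreal (\<bar>g x\<bar> powr q) * indicator S x \<partial>lborel)
        \<le> (\<integral>\<^sup>+ x. ennreal K * (ennreal (\<bar>g' x\<bar> powr 1) * indicator S x) \<partial>lborel)"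
  proof (rule nn_integral_mono_AE)
    show "AE x in lborel. ennreal (\<bar>g x\<bar> powr q) * indicator S x
        \<le> ennreal K * (ennreal (\<bar>g' x\<bar> powr 1) * indicator S x)"
      using ae
    proof (rule eventually_mono)
      fix x assume h: "x \<in> S \<longrightarrow> \<bar>g x\<bar> powr q \<le> K * \<bar>g' x\<bar> powr 1"
      show "ennreal (\<bar>g x\<bar> powr q) * indicator S x
        \<le> ennreal K * (ennreal (\<bar>g' x\<bar> powr 1) * indicator S x)"
      proof (cases "x \<in> S")
        case True
        then have "ennreal (\<bar>g x\<bar> powr q) \<le> ennreal (K * \<bar>g' x\<bar> powr 1)"
          using h by (intro ennreal_leI) auto
        then show ?thesis using True K by (simp add: ennreal_mult)
      qed simp
    qed
  qed
  also have "\<dots> \<le> ennreal K * J" unfolding J_def using K by (rule nn_integral_cmult_le)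
  finally have I: "(\<integral>\<^sup>+ x. ennreal (\<bar>g x\<bar> powr q) * indicator S x \<partial>lborel) \<le> ennreal K * J" .
  have "Lq_norm q S g \<le> enn_powr (ennreal K * J) (1/q)"
    unfolding Lq_norm_def using I q by (intro enn_powr_mono) auto
  also have "\<dots> = ennreal (K powr (1/q)) * enn_powr J (1/q)"
    using K q by (intro enn_powr_cmult) auto
  finally show ?thesis using LJ by simp
qed

lemma wab_powr: "wab (q * a) (q * b) x = (wab a b x) powr q"
  unfolding wab_def by (simp add: powr_mult powr_powr mult.commute)

lemma wab_pos: "x \<in> {-1<..<1} \<Longrightarrow> 0 < wab a b x"
  unfolding wab_def by auto

lemma pw:
  fixes q :: real
  assumes q: "1 < q" and cv: "convex_on {-1<..<1} f" and nn: "\<forall>x\<in>{-1..1}. 0 \<le> f x"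
    and H: "0 \<le> H" "y - H \<noteq> -1" "y + H \<noteq> 1"
  shows "\<bar>wab a b z * Delta2 f H y\<bar> powr q
      \<le> 2 powr (q-1) * \<bar>wab (q*a) (q*b) z * Delta2 (\<lambda>x. f x powr q) H y\<bar> powr 1"
proof (cases "y - H \<in> {-1..1} \<and> y + H \<in> {-1..1}")
  case False
  then have "Delta2 f H y = 0" "Delta2 (\<lambda>x. f x powr q) H y = 0"
    unfolding Delta2_def by (simp_all only: if_False)
  then show ?thesis by simp
next
  case True
  have r: "y - H \<in> {-1<..<1}" "y + H \<in> {-1<..<1}" "y \<in> {-1<..<1}" using True H by auto
  define A where "A = f (y - H)"
  define B where "B = f y"
  define C where "C = f (y + H)"
  have pos: "0 \<le> A" "0 \<le> B" "0 \<le> C" using nn r unfolding A_def B_def C_def by auto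
  have "f ((1 - 1/2) *\<^sub>R (y - H) + (1/2) *\<^sub>R (y + H)) \<le> (1 - 1/2) * f (y - H) + (1/2) * f (y + H)"
    using r by (intro convex_onD[OF cv]) auto
  then have mid: "2 * B \<le> A + C" unfolding A_def B_def C_def by (simp add: field_simps)
  have D1: "Delta2 f H y = A - 2*B + C" using True unfolding Delta2_def A_def B_def C_def by simp
  have D2: "Delta2 (\<lambda>x. f x powr q) H y = A powr q - 2 * B powr q + C powr q"
    using True unfolding Delta2_def A_def B_def C_def by simp
  have key: "(A - 2*B + C) powr q \<le> 2 powr (q - 1) * (A powr q - 2 * B powr q + C powr q)"
    using key_ineq[of A B C q] pos mid q by simp
  have E0: "0 \<le> A powr q - 2 * B powr q + C powr q"
  proof -
    have "0 \<le> 2 powr (q - 1) * (A powr q - 2 * B powr q + C powr q)"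
      using key by (meson order.trans powr_ge_zero)
    then show ?thesis by (simp add: zero_le_mult_iff)
  qed
  define w where "w = wab a b z"
  have w: "0 \<le> w" unfolding w_def wab_def by simp
  have "\<bar>w * (A - 2*B + C)\<bar> powr q = w powr q * (A - 2*B + C) powr q"
    using w mid by (simp add: powr_mult)
  also have "\<dots> \<le> w powr q * (2 powr (q - 1) * (A powr q - 2 * B powr q + C powr q))"
    using key by (intro mult_left_mono) auto
  also have "\<dots> = 2 powr (q-1) * \<bar>w powr q * (A powr q - 2 * B powr q + C powr q)\<bar> powr 1"
    using E0 by simp
  finally show ?thesis using D1 D2 by (simp add: wab_powr w_def)
qed


lemma bad_main1:
  fixes h x :: real assumes "x \<in> {-1..1}" "x - h * phi x = -1"
  shows "x = -1 \<or> x = (h\<^sup>2 - 1) / (h\<^sup>2 + 1)"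
proof -
  have p2: "(phi x)\<^sup>2 = 1 - x\<^sup>2" unfolding phi_def using assms(1)
    by (simp add: abs_square_le_1 abs_le_iff)
  have "(x + 1)\<^sup>2 = h\<^sup>2 * (phi x)\<^sup>2" using assms(2)
    by (metis add.commute diff_eq_eq power_mult_distrib uminus_add_conv_diff)
  then have "(x + 1)\<^sup>2 = h\<^sup>2 * (1 - x\<^sup>2)" using p2 by simp
  then have "(x + 1) * ((x + 1) - h\<^sup>2 * (1 - x)) = 0" by (simp add: algebra_simps power2_eq_square)
  then have "x + 1 = 0 \<or> (x + 1) - h\<^sup>2 * (1 - x) = 0" by (simp only: mult_eq_0_iff)
  then have "x = -1 \<or> x * (h\<^sup>2 + 1) = h\<^sup>2 - 1" by (auto simp: algebra_simps)
  moreover have "h\<^sup>2 + 1 \<noteq> 0" by (metis add_pos_nonneg zero_le_power2 zero_less_one less_irrefl add.commute)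
  ultimately show ?thesis by (auto simp: field_simps)
qed

lemma bad_main2:
  fixes h x :: real assumes "x \<in> {-1..1}" "x + h * phi x = 1"
  shows "x = 1 \<or> x = (1 - h\<^sup>2) / (1 + h\<^sup>2)"
proof -
  have p2: "(phi x)\<^sup>2 = 1 - x\<^sup>2" unfolding phi_def using assms(1)
    by (simp add: abs_square_le_1 abs_le_iff)
  have "(1 - x)\<^sup>2 = h\<^sup>2 * (phi x)\<^sup>2" using assms(2)
    by (metis add_diff_cancel_left' power_mult_distrib)
  then have "(1 - x)\<^sup>2 = h\<^sup>2 * (1 - x\<^sup>2)" using p2 by simp
  then have "(1 - x) * ((1 - x) - h\<^sup>2 * (1 + x)) = 0" by (simp add: algebra_simps power2_eq_square)
  then have "1 - x = 0 \<or> (1 - x) - h\<^sup>2 * (1 + x) = 0" by (simp only: mult_eq_0_iff)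
  then have "x = 1 \<or> x * (1 + h\<^sup>2) = 1 - h\<^sup>2" by (auto simp: algebra_simps)
  moreover have "1 + h\<^sup>2 \<noteq> 0" by (metis add_pos_nonneg zero_le_power2 zero_less_one less_irrefl)
  ultimately show ?thesis by (auto simp: field_simps)
qed


lemma part_generic:
  fixes K0 q :: real
  assumes q: "1 < q"
    and each: "\<And>h. h \<in> I \<Longrightarrow> Lq_norm q (S h) (G h) \<le> ennreal K0 * enn_powr (Lq_norm 1 (S h) (G' h)) (1/q)"
  shows "(SUP h\<in>I. Lq_norm q (S h) (G h)) \<le> ennreal K0 * enn_powr (SUP h\<in>I. Lq_norm 1 (S h) (G' h)) (1/q)"
proof (rule SUP_least)
  fix h assume h: "h \<in> I"
  have "Lq_norm q (S h) (G h) \<le> ennreal K0 * enn_powr (Lq_norm 1 (S h) (G' h)) (1/q)" using each h .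
  also have "\<dots> \<le> ennreal K0 * enn_powr (SUP h\<in>I. Lq_norm 1 (S h) (G' h)) (1/q)"
    using h q by (intro mult_left_mono enn_powr_mono SUP_upper) auto
  finally show "Lq_norm q (S h) (G h) \<le> ennreal K0 * enn_powr (SUP h\<in>I. Lq_norm 1 (S h) (G' h)) (1/q)" .
qed

lemma part_main:
  fixes q \<alpha> \<beta> \<delta> :: real
  assumes q: "1 < q" and cv: "convex_on {-1<..<1} f" and nn: "\<forall>x\<in>{-1..1}. 0 \<le> f x"
  shows "Omega_main f \<delta> (wab \<alpha> \<beta>) q \<le> ennreal ((2 powr (q-1)) powr (1/q)) *
     enn_powr (Omega_main (\<lambda>x. f x powr q) \<delta> (wab (q*\<alpha>) (q*\<beta>)) 1) (1/q)"
  unfolding Omega_main_def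
proof (rule part_generic[OF q])
  fix h :: real assume h: "h \<in> {0<..\<delta>}"
  let ?S = "{-1 + 8*h\<^sup>2..1 - 8*h\<^sup>2}"
  define F where "F = {-1, 1, (h\<^sup>2-1)/(h\<^sup>2+1), (1-h\<^sup>2)/(1+h\<^sup>2)}"
  have good: "\<bar>wab \<alpha> \<beta> x * Delta2 f (h*phi x) x\<bar> powr q \<le> 2 powr (q-1) *
       \<bar>wab (q*\<alpha>) (q*\<beta>) x * Delta2 (\<lambda>x. f x powr q) (h*phi x) x\<bar> powr 1"
    if x: "x \<in> ?S" "x \<notin> F" for x
  proof -
    have h2: "0 \<le> h\<^sup>2" by simp
    have "-1 + 8*h\<^sup>2 \<le> x" "x \<le> 1 - 8*h\<^sup>2" using x(1) by auto
    then have "-1 \<le> x" "x \<le> 1" using h2 by linarith+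
    then have xi: "x \<in> {-1..1}" by auto
    have "x - h * phi x \<noteq> -1" using bad_main1[OF xi] x(2) unfolding F_def by auto
    moreover have "x + h * phi x \<noteq> 1" using bad_main2[OF xi] x(2) unfolding F_def by auto
    moreover have "0 \<le> h * phi x" using h xi unfolding phi_def
      by (intro mult_nonneg_nonneg) (auto simp: abs_square_le_1 abs_le_iff)
    ultimately show ?thesis using pw[OF q cv nn] by blast
  qed
  have ae: "AE x in lborel. x \<in> ?S \<longrightarrow> \<bar>wab \<alpha> \<beta> x * Delta2 f (h*phi x) x\<bar> powr q \<le> 2 powr (q-1) *
       \<bar>wab (q*\<alpha>) (q*\<beta>) x * Delta2 (\<lambda>x. f x powr q) (h*phi x) x\<bar> powr 1"
    by (rule AE_I'[OF finite_imp_null_set_lborel[of F]]) (use good in \<open>auto simp: F_def\<close>)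
  show "Lq_norm q ?S (\<lambda>x. wab \<alpha> \<beta> x * Delta2 f (h * phi x) x) \<le> ennreal ((2 powr (q-1)) powr (1/q)) *
     enn_powr (Lq_norm 1 ?S (\<lambda>x. wab (q*\<alpha>) (q*\<beta>) x * Delta2 (\<lambda>x. f x powr q) (h * phi x) x)) (1/q)"
    by (rule Lq_bound[OF q _ ae]) simp
qed

lemma part_fwd:
  fixes q \<alpha> \<beta> \<delta> :: real
  assumes q: "1 < q" and cv: "convex_on {-1<..<1} f" and nn: "\<forall>x\<in>{-1..1}. 0 \<le> f x"
  shows "Omega_fwd f \<delta> (wab \<alpha> \<beta>) q \<le> ennreal ((2 powr (q-1)) powr (1/q)) *
     enn_powr (Omega_fwd (\<lambda>x. f x powr q) \<delta> (wab (q*\<alpha>) (q*\<beta>)) 1) (1/q)"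
  unfolding Omega_fwd_def
proof (rule part_generic[OF q])
  fix h :: real assume h: "h \<in> {0<..8 * \<delta>\<^sup>2}"
  let ?S = "{-1 .. -1 + 8 * \<delta>\<^sup>2}"
  define F where "F = {-1, 1 - 2 * h}"
  have good: "\<bar>wab \<alpha> \<beta> x * Delta2_fwd f h x\<bar> powr q \<le> 2 powr (q-1) *
       \<bar>wab (q*\<alpha>) (q*\<beta>) x * Delta2_fwd (\<lambda>x. f x powr q) h x\<bar> powr 1"
    if x: "x \<notin> F" for x
  proof -
    have "(x + h) - h \<noteq> -1" "(x + h) + h \<noteq> 1" "0 \<le> h" using x h unfolding F_def by auto
    then show ?thesis unfolding Delta2_fwd_def using pw[OF q cv nn] by blast
  qed
  have ae: "AE x in lborel. x \<in> ?S \<longrightarrow> \<bar>wab \<alpha> \<beta> x * Delta2_fwd f h x\<bar> powr q \<le> 2 powr (q-1) *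
       \<bar>wab (q*\<alpha>) (q*\<beta>) x * Delta2_fwd (\<lambda>x. f x powr q) h x\<bar> powr 1"
    by (rule AE_I'[OF finite_imp_null_set_lborel[of F]]) (use good in \<open>auto simp: F_def\<close>)
  show "Lq_norm q ?S (\<lambda>x. wab \<alpha> \<beta> x * Delta2_fwd f h x) \<le> ennreal ((2 powr (q-1)) powr (1/q)) *
     enn_powr (Lq_norm 1 ?S (\<lambda>x. wab (q*\<alpha>) (q*\<beta>) x * Delta2_fwd (\<lambda>x. f x powr q) h x)) (1/q)"
    by (rule Lq_bound[OF q _ ae]) simp
qed

lemma part_bwd:
  fixes q \<alpha> \<beta> \<delta> :: real
  assumes q: "1 < q" and cv: "convex_on {-1<..<1} f" and nn: "\<forall>x\<in>{-1..1}. 0 \<le> f x"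
  shows "Omega_bwd f \<delta> (wab \<alpha> \<beta>) q \<le> ennreal ((2 powr (q-1)) powr (1/q)) *
     enn_powr (Omega_bwd (\<lambda>x. f x powr q) \<delta> (wab (q*\<alpha>) (q*\<beta>)) 1) (1/q)"
  unfolding Omega_bwd_def
proof (rule part_generic[OF q])
  fix h :: real assume h: "h \<in> {0<..8 * \<delta>\<^sup>2}"
  let ?S = "{1 - 8 * \<delta>\<^sup>2 .. 1}"
  define F where "F = {1, -1 + 2 * h}"
  have good: "\<bar>wab \<alpha> \<beta> x * Delta2_bwd f h x\<bar> powr q \<le> 2 powr (q-1) *
       \<bar>wab (q*\<alpha>) (q*\<beta>) x * Delta2_bwd (\<lambda>x. f x powr q) h x\<bar> powr 1"
    if x: "x \<notin> F" for x
  proof -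
    have "(x - h) - h \<noteq> -1" "(x - h) + h \<noteq> 1" "0 \<le> h" using x h unfolding F_def by auto
    then show ?thesis unfolding Delta2_bwd_def using pw[OF q cv nn] by blast
  qed
  have ae: "AE x in lborel. x \<in> ?S \<longrightarrow> \<bar>wab \<alpha> \<beta> x * Delta2_bwd f h x\<bar> powr q \<le> 2 powr (q-1) *
       \<bar>wab (q*\<alpha>) (q*\<beta>) x * Delta2_bwd (\<lambda>x. f x powr q) h x\<bar> powr 1"
    by (rule AE_I'[OF finite_imp_null_set_lborel[of F]]) (use good in \<open>auto simp: F_def\<close>)
  show "Lq_norm q ?S (\<lambda>x. wab \<alpha> \<beta> x * Delta2_bwd f h x) \<le> ennreal ((2 powr (q-1)) powr (1/q)) *
     enn_powr (Lq_norm 1 ?S (\<lambda>x. wab (q*\<alpha>) (q*\<beta>) x * Delta2_bwd (\<lambda>x. f x powr q) h x)) (1/q)"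
    by (rule Lq_bound[OF q _ ae]) simp
qed


lemma three_ennreal: "(3::ennreal) * X = X + X + X"
proof -
  have "(3::ennreal) = 1 + 1 + 1" by simp
  then show ?thesis by (simp only: distrib_right mult_1)
qed

theorem lemma4p5:
  fixes q \<alpha> \<beta> :: real
  assumes "1 < q"
  shows "\<exists>c :: real. \<forall>f :: real \<Rightarrow> real.
           convex_on {-1<..<1} f \<and> (\<forall>x\<in>{-1..1}. 0 \<le> f x) \<and> f \<in> Wq q \<alpha> \<beta> \<longrightarrow>
             convex_on {-1<..<1} (\<lambda>x. f x powr q) \<and>
             (\<lambda>x. f x powr q) \<in> Wq 1 (q * \<alpha>) (q * \<beta>) \<and>
             (\<forall>\<delta>>0. omega_phi2 f \<delta> (wab \<alpha> \<beta>) q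
                \<le> ennreal c * enn_powr (omega_phi2 (\<lambda>x. f x powr q) \<delta> (wab (q * \<alpha>) (q * \<beta>)) 1) (1 / q))"
proof -
  have q: "1 < q" by fact
  define K0 where "K0 = (2 powr (q-1)) powr (1/q)"
  have K0: "0 \<le> K0" unfolding K0_def by simp
  show ?thesis
  proof (rule exI[of _ "3 * K0"], intro allI impI)
    fix f :: "real \<Rightarrow> real"
    assume A: "convex_on {-1<..<1} f \<and> (\<forall>x\<in>{-1..1}. 0 \<le> f x) \<and> f \<in> Wq q \<alpha> \<beta>"
    then have cv: "convex_on {-1<..<1} f" and nn: "\<forall>x\<in>{-1..1}. 0 \<le> f x"
      and W: "f \<in> Wq q \<alpha> \<beta>" by auto
    have C1: "convex_on {-1<..<1} (\<lambda>x. f x powr q)"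
    proof (rule convex_onI)
      fix t x y :: real assume t: "0 < t" "t < 1" and xy: "x \<in> {-1<..<1}" "y \<in> {-1<..<1}"
      define z where "z = (1 - t) *\<^sub>R x + t *\<^sub>R y"
      have "(1-t)*(-1) < (1-t)*x" "t*(-1) < t*y" "(1-t)*x < (1-t)*1" "t*y < t*1"
        using xy t by (intro mult_strict_left_mono; simp)+
      then have zin: "z \<in> {-1<..<1}" unfolding z_def by (simp; linarith)
      have fz: "f z \<le> (1 - t) * f x + t * f y" unfolding z_def
        using convex_onD[OF cv, of t x y] t xy by auto
      have pos: "0 \<le> f z" "0 \<le> f x" "0 \<le> f y" using nn zin xy by auto
      have "f z powr q \<le> ((1 - t) * f x + t * f y) powr q"
        using fz pos q by (intro powr_mono2) auto
      also have "\<dots> \<le> (1 - t) * f x powr q + t * f y powr q"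
        using convex_onD[OF powr_convex0[of q], of t "f x" "f y"] q t pos by auto
      finally show "f ((1 - t) *\<^sub>R x + t *\<^sub>R y) powr q \<le> (1 - t) * f x powr q + t * f y powr q"
        unfolding z_def .
    qed (rule convex_real_interval)
    have C2: "(\<lambda>x. f x powr q) \<in> Wq 1 (q * \<alpha>) (q * \<beta>)"
    proof -
      define I where "I = (\<integral>\<^sup>+ x. ennreal (\<bar>wab \<alpha> \<beta> x * f x\<bar> powr q) * indicator {-1..1} x \<partial>lborel)"
      have "enn_powr I (1/q) < \<infinity>" using W unfolding Wq_def Lq_norm_def I_def by simp
      then have If: "I \<noteq> \<infinity>" unfolding enn_powr_def by auto
      have eq: "(\<integral>\<^sup>+ x. ennreal (\<bar>wab (q * \<alpha>) (q * \<beta>) x * f x powr q\<bar> powr 1) * indicator {-1..1} x \<partial>lborel) = I"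
        unfolding I_def
      proof (rule nn_integral_cong)
        fix x :: real
        show "ennreal (\<bar>wab (q * \<alpha>) (q * \<beta>) x * f x powr q\<bar> powr 1) * indicator {-1..1} x =
              ennreal (\<bar>wab \<alpha> \<beta> x * f x\<bar> powr q) * indicator {-1..1} x"
        proof (cases "x \<in> {-1..1}")
          case True
          have w0: "0 \<le> wab \<alpha> \<beta> x" unfolding wab_def by simp
          have "\<bar>wab (q * \<alpha>) (q * \<beta>) x * f x powr q\<bar> powr 1 = (wab \<alpha> \<beta> x * f x) powr q"
            by (simp add: wab_powr powr_mult)
          also have "\<dots> = \<bar>wab \<alpha> \<beta> x * f x\<bar> powr q" using w0 nn True by simp
          finally show ?thesis by simp
        qed simp
      qed
      have "Lq_norm 1 {-1..1} (\<lambda>x. wab (q * \<alpha>) (q * \<beta>) x * f x powr q) = I"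
        unfolding Lq_norm_def by (simp only: div_by_1 enn_powr_one eq)
      then show ?thesis unfolding Wq_def using If by (simp add: less_top)
    qed
    have C3: "\<forall>\<delta>>0. omega_phi2 f \<delta> (wab \<alpha> \<beta>) q
                \<le> ennreal (3 * K0) * enn_powr (omega_phi2 (\<lambda>x. f x powr q) \<delta> (wab (q * \<alpha>) (q * \<beta>)) 1) (1 / q)"
    proof (intro allI impI)
      fix \<delta> :: real assume "\<delta> > 0"
      let ?g = "\<lambda>x. f x powr q"
      let ?w = "wab (q * \<alpha>) (q * \<beta>)"
      define M' where "M' = Omega_main ?g \<delta> ?w 1"
      define F' where "F' = Omega_fwd ?g \<delta> ?w 1"
      define B' where "B' = Omega_bwd ?g \<delta> ?w 1"
      define T where "T = enn_powr (M' + F' + B') (1/q)"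
      have qp: "0 < 1/q" using q by simp
      have m: "enn_powr M' (1/q) \<le> T" unfolding T_def
        by (intro enn_powr_mono qp) (simp add: add.assoc add_increasing2)
      have fw: "enn_powr F' (1/q) \<le> T" unfolding T_def
        by (intro enn_powr_mono qp) (metis add.commute add.left_commute add_increasing2 zero_le le_add_same_cancel1 order_refl)
      have bw: "enn_powr B' (1/q) \<le> T" unfolding T_def
        by (intro enn_powr_mono qp) (simp add: add_increasing)
      have "omega_phi2 f \<delta> (wab \<alpha> \<beta>) q = Omega_main f \<delta> (wab \<alpha> \<beta>) q + Omega_fwd f \<delta> (wab \<alpha> \<beta>) q + Omega_bwd f \<delta> (wab \<alpha> \<beta>) q"
        unfolding omega_phi2_def ..
      also have "\<dots> \<le> ennreal K0 * T + ennreal K0 * T + ennreal K0 * T"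
      proof (intro add_mono)
        show "Omega_main f \<delta> (wab \<alpha> \<beta>) q \<le> ennreal K0 * T"
          using part_main[OF q cv nn, of \<delta> \<alpha> \<beta>] mult_left_mono[OF m, of "ennreal K0"]
          unfolding K0_def M'_def by simp
        show "Omega_fwd f \<delta> (wab \<alpha> \<beta>) q \<le> ennreal K0 * T"
          using part_fwd[OF q cv nn, of \<delta> \<alpha> \<beta>] mult_left_mono[OF fw, of "ennreal K0"]
          unfolding K0_def F'_def by simp
        show "Omega_bwd f \<delta> (wab \<alpha> \<beta>) q \<le> ennreal K0 * T"
          using part_bwd[OF q cv nn, of \<delta> \<alpha> \<beta>] mult_left_mono[OF bw, of "ennreal K0"]
          unfolding K0_def B'_def by simp
      qed
      also have "\<dots> = ennreal (3 * K0) * T"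
        using K0 by (simp add: ennreal_mult mult.assoc three_ennreal distrib_right)
      finally have fin: "omega_phi2 f \<delta> (wab \<alpha> \<beta>) q \<le> ennreal (3 * K0) * T" .
      have Teq: "T = enn_powr (omega_phi2 ?g \<delta> ?w 1) (1 / q)"
        unfolding T_def M'_def F'_def B'_def omega_phi2_def ..
      show "omega_phi2 f \<delta> (wab \<alpha> \<beta>) q \<le> ennreal (3 * K0) *
          enn_powr (omega_phi2 ?g \<delta> ?w 1) (1 / q)"
        using fin unfolding Teq .
    qed
    show "convex_on {-1<..<1} (\<lambda>x. f x powr q) \<and>
             (\<lambda>x. f x powr q) \<in> Wq 1 (q * \<alpha>) (q * \<beta>) \<and>
             (\<forall>\<delta>>0. omega_phi2 f \<delta> (wab \<alpha> \<beta>) q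
                \<le> ennreal (3 * K0) * enn_powr (omega_phi2 (\<lambda>x. f x powr q) \<delta> (wab (q * \<alpha>) (q * \<beta>)) 1) (1 / q))"
      using C1 C2 C3 by blast
  qed
qed

end
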